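(* Assume the normalization $\sigma_j=e$, $\eta_j=i\infty$ and $\begin{pmatrix}1&1\\0&1\end{pmatrix}\in\Gamma$, and let $\kappa>0$. Let $p=\Gamma\begin{pmatrix}a&b\\c&d\end{pmatrix}\in\Gamma\backslash\mathrm{PSL}(2,\mathbb R)$ with $c\neq0$. Then $p\notin S_{j,\kappa}$ if and only if $a/c\notin S_\kappa$.
   Context: $G=\mathrm{PSL}(2,\mathbb R)$ acts linearly on $\mathbb R^2/\pm$; $\Gamma<G$ is a non-uniform lattice, one of whose cusps $\eta_j$ is at $i\infty$ with $\sigma_j=e$; $N=\{\begin{pmatrix}1&t\\0&1\end{pmatrix}\}$, $e_1=(1,0)^T$, $\Gamma_j=\Gamma\cap N$, $\pi_j:\Gamma_j\backslash G\to\Gamma\backslash G$ the projection, $m_j(\Gamma_jg)=g^{-1}e_1\in\mathbb R^2/\pm$. $S_{j,\kappa}$ is the set of $p\in\Gamma\backslash G$ for which there exist $\mu,\nu>0$ such that every $(a',b')^T\in m_j(\pi_j^{-1}(p))$ satisfies $|b'|\ge\mu$ or $|a'|^\kappa|b'|\ge\nu$. A real number $x$ is Diophantine of type $\kappa$ with respect to $\Gamma e_1$ if there is $\tilde C>0$ with $|\beta|^\kappa|x\beta-\alpha|\ge\tilde C$ for all $(\alpha,\beta)\in\Gamma e_1$ with $\beta\ne0$; $S_\kappa\subset\mathbb R$ denotes the set of such $x$. *)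

theory Defs
  imports "HOL-Analysis.Analysis"
begin

text \<open>Elements of PSL(2,R) are represented by matrices in SL(2,R); a subgroup of
PSL(2,R) is represented by its full preimage in SL(2,R) (which contains -I).
Entry g $ 1 $ 1 = a, g $ 1 $ 2 = b, g $ 2 $ 1 = c, g $ 2 $ 2 = d.\<close>

type_synonym mat2 = "real^2^2"

definition SL2 :: "mat2 set" where
  "SL2 = {g. det g = 1}"

definition mat2 :: "real \<Rightarrow> real \<Rightarrow> real \<Rightarrow> real \<Rightarrow> mat2" where
  "mat2 a b c d = vector [vector [a, b], vector [c, d]]"

definition e1 :: "real^2" where
  "e1 = vector [1, 0]"

definition transl :: "real \<Rightarrow> mat2" where
  "transl t = mat2 1 t 0 1"

definition psl_subgroup :: "mat2 set \<Rightarrow> bool" where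
  "psl_subgroup \<Gamma> \<longleftrightarrow> \<Gamma> \<subseteq> SL2 \<and> mat 1 \<in> \<Gamma> \<and> - mat 1 \<in> \<Gamma> \<and>
     (\<forall>g\<in>\<Gamma>. \<forall>h\<in>\<Gamma>. g ** h \<in> \<Gamma>) \<and> (\<forall>g\<in>\<Gamma>. matrix_inv g \<in> \<Gamma>)"

definition discrete_set :: "mat2 set \<Rightarrow> bool" where
  "discrete_set \<Gamma> \<longleftrightarrow> (\<forall>g\<in>\<Gamma>. \<exists>e>0. \<forall>h\<in>\<Gamma>. dist h g < e \<longrightarrow> h = g)"

definition mobius :: "mat2 \<Rightarrow> complex \<Rightarrow> complex" where
  "mobius g z = (of_real (g$1$1) * z + of_real (g$1$2)) / (of_real (g$2$1) * z + of_real (g$2$2))"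

definition upper_half_plane :: "complex set" where
  "upper_half_plane = {z. Im z > 0}"

definition hyp_area :: "complex measure" where
  "hyp_area = density lborel (\<lambda>z. ennreal (1 / (Im z)^2))"

text \<open>Lattice: discrete subgroup of finite covolume, i.e. a measurable set of finite
hyperbolic area whose translates cover the upper half plane (equivalently, finite Haar
covolume in PSL(2,R) = H x compact).\<close>
definition psl_lattice :: "mat2 set \<Rightarrow> bool" where
  "psl_lattice \<Gamma> \<longleftrightarrow> psl_subgroup \<Gamma> \<and> discrete_set \<Gamma> \<and>
     (\<exists>F. F \<in> sets lborel \<and> F \<subseteq> upper_half_plane \<and> emeasure hyp_area F < \<infinity> \<and>
          (\<Union>\<gamma>\<in>\<Gamma>. mobius \<gamma> ` F) = upper_half_plane)"

definition nonuniform :: "mat2 set \<Rightarrow> bool" where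
  "nonuniform \<Gamma> \<longleftrightarrow> \<not> (\<exists>K. compact K \<and> K \<subseteq> SL2 \<and> {\<gamma> ** k | \<gamma> k. \<gamma> \<in> \<Gamma> \<and> k \<in> K} = SL2)"

definition coset :: "mat2 set \<Rightarrow> mat2 \<Rightarrow> mat2 set" where
  "coset \<Gamma> g = (\<lambda>\<gamma>. \<gamma> ** g) ` \<Gamma>"

text \<open>m_j(Gamma_j h) = h^{-1} e1 (well defined since N fixes e1); vectors in R^2/+-
are represented by either lift, all conditions below are sign-invariant.\<close>
definition m_j :: "mat2 \<Rightarrow> real^2" where
  "m_j h = matrix_inv h *v e1"

text \<open>S_{j,kappa} as a set of cosets p; m_j(pi_j^{-1}(p)) = {m_j h | h in p}.\<close>
definition S_jk :: "mat2 set \<Rightarrow> real \<Rightarrow> mat2 set set" where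
  "S_jk \<Gamma> \<kappa> = {p. \<exists>\<mu>>0. \<exists>\<nu>>0. \<forall>v\<in>m_j ` p.
       \<bar>v$2\<bar> \<ge> \<mu> \<or> \<bar>v$1\<bar> powr \<kappa> * \<bar>v$2\<bar> \<ge> \<nu>}"

definition S_k :: "mat2 set \<Rightarrow> real \<Rightarrow> real set" where
  "S_k \<Gamma> \<kappa> = {x. \<exists>C>0. \<forall>w\<in>(\<lambda>\<gamma>. \<gamma> *v e1) ` \<Gamma>.
       w$2 \<noteq> 0 \<longrightarrow> \<bar>w$2\<bar> powr \<kappa> * \<bar>x * w$2 - w$1\<bar> \<ge> C}"

end

theory Submission
  imports Defs
begin

definition adj2 :: "mat2 \<Rightarrow> mat2" where "adj2 h = mat2 (h$2$2) (-h$1$2) (-h$2$1) (h$1$1)"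
lemma mat2_nth[simp]: "mat2 a b c d $1$1 = a" "mat2 a b c d $1$2 = b" "mat2 a b c d $2$1 = c" "mat2 a b c d $2$2 = d"
  by (simp_all add: mat2_def)
lemma sum2: "(\<Sum>i\<in>(UNIV::2 set). f i) = f 1 + f 2"
  by (simp add: UNIV_2)
lemma adj2_props: assumes "det h = 1" shows "h ** adj2 h = mat 1" "adj2 h ** h = mat 1"
  using assms unfolding adj2_def det_2
  by (auto simp: vec_eq_iff forall_2 matrix_matrix_mult_def sum2 mat_def algebra_simps)
lemma inv2: assumes "det h = 1" shows "matrix_inv h = adj2 h"
proof -
  have *: "h ** matrix_inv h = mat 1 \<and> matrix_inv h ** h = mat 1"
    unfolding matrix_inv_def by (rule someI[of _ "adj2 h"]) (use adj2_props[OF assms] in auto)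
  have "adj2 h = adj2 h ** (h ** matrix_inv h)" using * by (simp add: matrix_mul_rid)
  also have "\<dots> = (adj2 h ** h) ** matrix_inv h" by (simp add: matrix_mul_assoc)
  also have "\<dots> = matrix_inv h" using adj2_props[OF assms] by (simp add: matrix_mul_lid)
  finally show ?thesis by simp
qed


lemma dir1:
  fixes a b c d \<kappa> C :: real and Wp :: "(real*real) set"
  assumes det: "a*d - b*c = 1" and c: "c \<noteq> 0" and k: "\<kappa>>0"
    and P1: "\<And>\<alpha> \<beta>. (\<alpha>,\<beta>)\<in>Wp \<Longrightarrow> \<beta>=0 \<Longrightarrow> \<bar>\<alpha>\<bar> = 1"
    and C: "C > 0" and H: "\<And>\<alpha> \<beta>. (\<alpha>,\<beta>)\<in>Wp \<Longrightarrow> \<beta>\<noteq>0 \<Longrightarrow> \<bar>\<beta>\<bar> powr \<kappa> * \<bar>a/c*\<beta> - \<alpha>\<bar> \<ge> C"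
  shows "\<exists>\<mu>>0. \<exists>\<nu>>0. \<forall>(\<alpha>,\<beta>)\<in>Wp. \<bar>a*\<beta> - c*\<alpha>\<bar> \<ge> \<mu> \<or> \<bar>d*\<alpha> - b*\<beta>\<bar> powr \<kappa> * \<bar>a*\<beta> - c*\<alpha>\<bar> \<ge> \<nu>"
proof -
  define D where "D = \<bar>d\<bar> + 1"
  define \<mu> where "\<mu> = min \<bar>c\<bar> (min (1/(2*D)) (C*\<bar>c\<bar>))"
  define \<nu> where "\<nu> = C*\<bar>c\<bar> / (2*\<bar>c\<bar>) powr \<kappa>"
  have D: "D \<ge> 1" unfolding D_def by simp
  have mu: "\<mu> > 0" unfolding \<mu>_def using D c C by auto
  have nu: "\<nu> > 0" unfolding \<nu>_def using c C by auto
  have "\<bar>a*\<beta> - c*\<alpha>\<bar> \<ge> \<mu> \<or> \<bar>d*\<alpha> - b*\<beta>\<bar> powr \<kappa> * \<bar>a*\<beta> - c*\<alpha>\<bar> \<ge> \<nu>" if w: "(\<alpha>,\<beta>)\<in>Wp" for \<alpha> \<beta>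
  proof (cases "\<mu> \<le> \<bar>a*\<beta> - c*\<alpha>\<bar>")
    case True thus ?thesis by blast
  next
    case False
    define t where "t = a*\<beta> - c*\<alpha>"
    define s where "s = d*\<alpha> - b*\<beta>"
    have tl: "\<bar>t\<bar> < \<mu>" using False unfolding t_def by simp
    have bet: "\<beta> = c* s + d*t" unfolding s_def t_def using det by algebra
    have "\<beta> \<noteq> 0"
    proof
      assume "\<beta> = 0"
      hence "\<bar>t\<bar> = \<bar>c\<bar>" using P1[OF w] unfolding t_def by (simp add: abs_mult)
      thus False using tl unfolding \<mu>_def by linarith
    qed
    have "a/c*\<beta> - \<alpha> = t/c" unfolding t_def using c by (simp add: diff_divide_distrib)
    hence teq: "\<bar>a/c*\<beta> - \<alpha>\<bar> = \<bar>t\<bar>/\<bar>c\<bar>" by (simp add: abs_divide)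
    have Hb: "\<bar>\<beta>\<bar> powr \<kappa> * \<bar>t\<bar> \<ge> C*\<bar>c\<bar>"
      proof -
      have "C \<le> (\<bar>\<beta>\<bar> powr \<kappa> * \<bar>t\<bar>)/\<bar>c\<bar>" using H[OF w \<open>\<beta>\<noteq>0\<close>] unfolding teq by simp
      thus ?thesis using c by (simp add: pos_le_divide_eq)
    qed
    have bb: "\<bar>\<beta>\<bar> \<le> \<bar>c\<bar>*\<bar>s\<bar> + \<bar>d\<bar>*\<bar>t\<bar>" unfolding bet
      by (metis abs_mult abs_triangle_ineq)
    have dt: "\<bar>d\<bar>*\<bar>t\<bar> \<le> D*\<mu>" proof -
      have "\<bar>d\<bar>*\<bar>t\<bar> \<le> \<bar>d\<bar>*\<mu>" using tl by (intro mult_left_mono) auto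
      thus ?thesis unfolding D_def using mu by (simp add: distrib_right)
    qed
    have "\<bar>s\<bar> powr \<kappa> * \<bar>t\<bar> \<ge> \<nu>"
    proof (cases "\<bar>c\<bar>*\<bar>s\<bar> \<ge> D*\<mu>")
      case True
      have "\<bar>\<beta>\<bar> \<le> (2*\<bar>c\<bar>)*\<bar>s\<bar>" using bb dt True by linarith
      hence "\<bar>\<beta>\<bar> powr \<kappa> \<le> ((2*\<bar>c\<bar>)*\<bar>s\<bar>) powr \<kappa>" using k by (intro powr_mono2) auto
      also have "\<dots> = (2*\<bar>c\<bar>) powr \<kappa> * \<bar>s\<bar> powr \<kappa>" by (simp add: powr_mult)
      finally have "C*\<bar>c\<bar> \<le> (2*\<bar>c\<bar>) powr \<kappa> * (\<bar>s\<bar> powr \<kappa> * \<bar>t\<bar>)"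
        using Hb by (smt (verit) abs_ge_zero mult.assoc mult_right_mono)
      thus ?thesis unfolding \<nu>_def using c by (simp add: divide_le_eq mult.commute)
    next
      case False
      have "\<bar>\<beta>\<bar> \<le> 2*D*\<mu>" using bb dt False by linarith
      also have "\<dots> \<le> 1"
      proof -
        have "\<mu> \<le> 1/(2*D)" unfolding \<mu>_def by linarith
        hence "(2*D)*\<mu> \<le> (2*D)*(1/(2*D))" using D by (intro mult_left_mono) auto
        thus ?thesis using D by simp
      qed
      finally have "\<bar>\<beta>\<bar> powr \<kappa> \<le> 1" using k by (intro powr_le1) auto
      hence "\<bar>\<beta>\<bar> powr \<kappa> * \<bar>t\<bar> \<le> 1 * \<bar>t\<bar>" by (intro mult_right_mono) auto
      hence "C*\<bar>c\<bar> \<le> \<bar>t\<bar>" using Hb by linarith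
      hence "\<mu> \<le> \<bar>t\<bar>" unfolding \<mu>_def by linarith
      thus ?thesis using tl by linarith
    qed
    thus ?thesis unfolding s_def t_def by blast
  qed
  thus ?thesis using mu nu by blast
qed
lemma dir2:
  fixes a b c d \<kappa> \<mu> \<nu> :: real and Wp :: "(real*real) set"
  assumes det: "a*d - b*c = 1" and c: "c \<noteq> 0" and k: "\<kappa>>0"
    and P2: "\<And>\<alpha> \<beta> n. (\<alpha>,\<beta>)\<in>Wp \<Longrightarrow> (\<alpha> + of_int n * \<beta>, \<beta>) \<in> Wp"
    and mu: "\<mu> > 0" and nu: "\<nu> > 0"
    and G: "\<And>\<alpha> \<beta>. (\<alpha>,\<beta>)\<in>Wp \<Longrightarrow> \<bar>a*\<beta> - c*\<alpha>\<bar> \<ge> \<mu> \<or> \<bar>d*\<alpha> - b*\<beta>\<bar> powr \<kappa> * \<bar>a*\<beta> - c*\<alpha>\<bar> \<ge> \<nu>"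
  shows "\<exists>C>0. \<forall>(\<alpha>,\<beta>)\<in>Wp. \<beta>\<noteq>0 \<longrightarrow> \<bar>\<beta>\<bar> powr \<kappa> * \<bar>a/c*\<beta> - \<alpha>\<bar> \<ge> C"
proof -
  define K where "K = (1 + \<bar>d\<bar>*\<bar>c\<bar>)/\<bar>c\<bar>"
  define L where "L = min 1 (min ((\<mu>/\<bar>c\<bar>) powr \<kappa>) (\<nu>/(K powr \<kappa> * \<bar>c\<bar>)))"
  define D where "D = \<bar>d\<bar> + 1"
  define M where "M = (2*D*\<mu>/\<bar>c\<bar>) powr \<kappa>"
  define C where "C = min (L*\<mu>) (min (\<nu>*(\<bar>c\<bar>/2) powr \<kappa>) (L*\<nu>/M)) / \<bar>c\<bar>"
  have Kp: "K > 0" unfolding K_def using c by (simp add: add_pos_nonneg)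
  have Lp: "L > 0" unfolding L_def using c mu nu Kp by auto
  have Dp: "D \<ge> 1" unfolding D_def by simp
  have Mp: "M > 0" unfolding M_def using c mu Dp by simp
  have Cp: "C > 0" unfolding C_def using Lp mu nu Mp c by auto
  have Lb: "\<bar>\<beta>\<bar> powr \<kappa> \<ge> L" if w: "(\<alpha>,\<beta>)\<in>Wp" and b0: "\<beta>\<noteq>0" for \<alpha> \<beta>
  proof (cases "\<bar>c\<bar>*\<bar>\<beta>\<bar> \<ge> \<mu>")
    case True
    hence "\<mu>/\<bar>c\<bar> \<le> \<bar>\<beta>\<bar>" using c by (simp add: divide_le_eq mult.commute)
    hence "(\<mu>/\<bar>c\<bar>) powr \<kappa> \<le> \<bar>\<beta>\<bar> powr \<kappa>" using k mu c by (intro powr_mono2) auto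
    thus ?thesis unfolding L_def by linarith
  next
    case False
    define r where "r = c*\<beta>"
    have r0: "r \<noteq> 0" unfolding r_def using c b0 by simp
    define t where "t = a*\<beta> - c*\<alpha>"
    define n where "n = floor (t/r)"
    define \<alpha>' where "\<alpha>' = \<alpha> + of_int n * \<beta>"
    have w': "(\<alpha>',\<beta>) \<in> Wp" unfolding \<alpha>'_def by (rule P2[OF w])
    define t' where "t' = a*\<beta> - c*\<alpha>'"
    define s' where "s' = d*\<alpha>' - b*\<beta>"
    have "r * (t/r - of_int n) = t - of_int n * r" using r0 by (simp add: right_diff_distrib)
    hence t't: "t' = r * (t/r - of_int n)" unfolding t'_def \<alpha>'_def r_def t_def
      by (simp add: algebra_simps)
    have "0 \<le> t/r - of_int n" "t/r - of_int n < 1" unfolding n_def by linarith+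
    hence tl: "\<bar>t'\<bar> < \<bar>r\<bar>" unfolding t't using r0 by (simp add: abs_mult)
    hence tlm: "\<bar>t'\<bar> < \<mu>" using False unfolding r_def by (simp add: abs_mult)
    hence Gs: "\<bar>s'\<bar> powr \<kappa> * \<bar>t'\<bar> \<ge> \<nu>" using G[OF w'] unfolding s'_def t'_def by linarith
    have bet: "\<beta> = c* s' + d*t'" unfolding s'_def t'_def using det by algebra
    have "\<bar>c\<bar>*\<bar>s'\<bar> = \<bar>\<beta> - d*t'\<bar>" using bet by (simp add: abs_mult[symmetric])
    also have "\<dots> \<le> \<bar>\<beta>\<bar> + \<bar>d\<bar>*\<bar>t'\<bar>" by (simp add: abs_mult[symmetric] abs_triangle_ineq4)
    also have "\<dots> \<le> \<bar>\<beta>\<bar> + \<bar>d\<bar>*(\<bar>c\<bar>*\<bar>\<beta>\<bar>)" using tl unfolding r_def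
      by (intro add_left_mono mult_left_mono) (auto simp: abs_mult)
    finally have "\<bar>s'\<bar> \<le> (\<bar>\<beta>\<bar> + \<bar>d\<bar>*(\<bar>c\<bar>*\<bar>\<beta>\<bar>))/\<bar>c\<bar>" using c by (simp add: pos_le_divide_eq mult.commute)
    moreover have "(\<bar>\<beta>\<bar> + \<bar>d\<bar>*(\<bar>c\<bar>*\<bar>\<beta>\<bar>))/\<bar>c\<bar> = K*\<bar>\<beta>\<bar>" unfolding K_def
      by (simp add: algebra_simps)
    ultimately have "\<bar>s'\<bar> \<le> K*\<bar>\<beta>\<bar>" by simp
    hence "\<bar>s'\<bar> powr \<kappa> \<le> (K*\<bar>\<beta>\<bar>) powr \<kappa>" using k by (intro powr_mono2) auto
    also have "\<dots> = K powr \<kappa> * \<bar>\<beta>\<bar> powr \<kappa>" using Kp by (simp add: powr_mult)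
    finally have "\<nu> \<le> K powr \<kappa> * \<bar>\<beta>\<bar> powr \<kappa> * \<bar>t'\<bar>" using Gs
      by (smt (verit) abs_ge_zero mult_right_mono)
    also have "\<dots> \<le> K powr \<kappa> * \<bar>\<beta>\<bar> powr \<kappa> * (\<bar>c\<bar>*\<bar>\<beta>\<bar>)" using tl unfolding r_def
      by (intro mult_left_mono) (auto simp: abs_mult)
    also have "\<dots> = (K powr \<kappa> * \<bar>c\<bar>) * (\<bar>\<beta>\<bar> powr \<kappa> * \<bar>\<beta>\<bar>)" by (simp add: ac_simps)
    finally have nb: "\<nu> / (K powr \<kappa> * \<bar>c\<bar>) \<le> \<bar>\<beta>\<bar> powr \<kappa> * \<bar>\<beta>\<bar>" using Kp c
      by (simp add: pos_divide_le_eq mult.commute)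
    show ?thesis
    proof (cases "\<bar>\<beta>\<bar> \<ge> 1")
      case True
      hence "1 \<le> \<bar>\<beta>\<bar> powr \<kappa>" using k by (simp add: ge_one_powr_ge_zero)
      thus ?thesis unfolding L_def by linarith
    next
      case False
      hence "\<bar>\<beta>\<bar> powr \<kappa> * \<bar>\<beta>\<bar> \<le> \<bar>\<beta>\<bar> powr \<kappa>" by (intro mult_left_le) auto
      thus ?thesis using nb unfolding L_def by linarith
    qed
  qed
  have "\<bar>\<beta>\<bar> powr \<kappa> * \<bar>a/c*\<beta> - \<alpha>\<bar> \<ge> C" if w: "(\<alpha>,\<beta>)\<in>Wp" and b0: "\<beta>\<noteq>0" for \<alpha> \<beta>
  proof -
    define t where "t = a*\<beta> - c*\<alpha>"
    define s where "s = d*\<alpha> - b*\<beta>"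
    have "a/c*\<beta> - \<alpha> = t/c" unfolding t_def using c by (simp add: diff_divide_distrib)
    hence teq: "\<bar>a/c*\<beta> - \<alpha>\<bar> = \<bar>t\<bar>/\<bar>c\<bar>" by (simp add: abs_divide)
    have L1: "L \<le> \<bar>\<beta>\<bar> powr \<kappa>" by (rule Lb[OF w b0])
    have main: "\<bar>\<beta>\<bar> powr \<kappa> * \<bar>t\<bar> \<ge> C*\<bar>c\<bar>"
    proof (cases "\<bar>t\<bar> \<ge> \<mu>")
      case True
      have "L*\<mu> \<le> \<bar>\<beta>\<bar> powr \<kappa> * \<bar>t\<bar>" using L1 True Lp mu by (intro mult_mono) auto
      thus ?thesis unfolding C_def using c by (simp add: min_le_iff_disj)
    next
      case False
      hence Gs: "\<bar>s\<bar> powr \<kappa> * \<bar>t\<bar> \<ge> \<nu>" using G[OF w] unfolding s_def t_def by linarith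
      have bet: "\<beta> = c* s + d*t" unfolding s_def t_def using det by algebra
      have "\<bar>c\<bar>*\<bar>s\<bar> = \<bar>\<beta> - d*t\<bar>" using bet by (simp add: abs_mult[symmetric])
      also have "\<dots> \<le> \<bar>\<beta>\<bar> + \<bar>d\<bar>*\<bar>t\<bar>" by (simp add: abs_mult[symmetric] abs_triangle_ineq4)
      also have "\<dots> \<le> \<bar>\<beta>\<bar> + D*\<mu>"
      proof -
        have "\<bar>d\<bar>*\<bar>t\<bar> \<le> \<bar>d\<bar>*\<mu>" using False by (intro mult_left_mono) auto
        thus ?thesis unfolding D_def using mu by (simp add: distrib_right)
      qed
      finally have cs: "\<bar>c\<bar>*\<bar>s\<bar> \<le> \<bar>\<beta>\<bar> + D*\<mu>" .
      show ?thesis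
      proof (cases "\<bar>\<beta>\<bar> \<ge> D*\<mu>")
        case True
        hence "\<bar>c\<bar>*\<bar>s\<bar> \<le> 2*\<bar>\<beta>\<bar>" using cs by linarith
        hence "\<bar>s\<bar> \<le> (2*\<bar>\<beta>\<bar>)/\<bar>c\<bar>" using c by (simp add: pos_le_divide_eq mult.commute)
        hence "\<bar>s\<bar> \<le> (2/\<bar>c\<bar>) * \<bar>\<beta>\<bar>" by simp
        hence "\<bar>s\<bar> powr \<kappa> \<le> ((2/\<bar>c\<bar>) * \<bar>\<beta>\<bar>) powr \<kappa>" using k by (intro powr_mono2) auto
        also have "\<dots> = (2/\<bar>c\<bar>) powr \<kappa> * \<bar>\<beta>\<bar> powr \<kappa>" by (rule powr_mult)
        finally have "\<nu> \<le> (2/\<bar>c\<bar>) powr \<kappa> * (\<bar>\<beta>\<bar> powr \<kappa> * \<bar>t\<bar>)" using Gs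
          by (smt (verit) abs_ge_zero mult.assoc mult_right_mono)
        hence "\<nu> / (2/\<bar>c\<bar>) powr \<kappa> \<le> \<bar>\<beta>\<bar> powr \<kappa> * \<bar>t\<bar>" using c
          by (simp add: divide_le_eq mult.commute)
        moreover have "\<nu> / (2/\<bar>c\<bar>) powr \<kappa> = \<nu>*(\<bar>c\<bar>/2) powr \<kappa>" using c
          by (simp add: powr_divide)
        ultimately show ?thesis unfolding C_def using c by (simp add: min_le_iff_disj)
      next
        case False
        hence "\<bar>c\<bar>*\<bar>s\<bar> \<le> 2*D*\<mu>" using cs by linarith
        hence "\<bar>s\<bar> \<le> 2*D*\<mu>/\<bar>c\<bar>" using c by (simp add: pos_le_divide_eq mult.commute)
        hence "\<bar>s\<bar> powr \<kappa> \<le> M" unfolding M_def using k by (intro powr_mono2) auto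
        hence "\<nu> \<le> M * \<bar>t\<bar>" using Gs by (smt (verit) abs_ge_zero mult_right_mono)
        hence "\<nu>/M \<le> \<bar>t\<bar>" using Mp by (simp add: divide_le_eq mult.commute)
        hence "L*(\<nu>/M) \<le> \<bar>\<beta>\<bar> powr \<kappa> * \<bar>t\<bar>" using L1 Lp nu Mp by (intro mult_mono) auto
        thus ?thesis unfolding C_def using c by (simp add: min_le_iff_disj)
      qed
    qed
    have "C \<le> (\<bar>\<beta>\<bar> powr \<kappa> * \<bar>t\<bar>)/\<bar>c\<bar>" using main c by (simp add: pos_le_divide_eq)
    thus ?thesis unfolding teq by simp
  qed
  thus ?thesis using Cp by blast
qed

lemma mv_e1: "(h *v e1)$1 = h$1$1" "(h *v e1)$2 = h$2$1"
  by (simp_all add: matrix_vector_mult_def e1_def sum2)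
lemma mm_ent: fixes h k :: mat2 shows "(h ** k)$1$1 = h$1$1*k$1$1 + h$1$2*k$2$1" "(h ** k)$2$1 = h$2$1*k$1$1 + h$2$2*k$2$1"
   "(h ** k)$1$2 = h$1$1*k$1$2 + h$1$2*k$2$2" "(h ** k)$2$2 = h$2$1*k$1$2 + h$2$2*k$2$2"
  by (simp_all add: matrix_matrix_mult_def sum2)
lemma adj2_ent[simp]: "adj2 h $1$1 = h$2$2" "adj2 h $1$2 = - h$1$2" "adj2 h $2$1 = - h$2$1" "adj2 h $2$2 = h$1$1"
  by (simp_all add: adj2_def)
lemma adj2_adj2: "adj2 (adj2 h) = h"
  by (simp add: vec_eq_iff forall_2)
lemma det_adj2: "det (adj2 h) = det h" by (simp add: det_2 algebra_simps)

theorem lemmaA6: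
  fixes \<Gamma> :: "mat2 set" and \<kappa> :: real and g :: mat2
  assumes "psl_lattice \<Gamma>" and "nonuniform \<Gamma>"
    and "{\<gamma>\<in>\<Gamma>. \<gamma>$2$1 = 0} = {s *\<^sub>R transl (of_int n) | s n. s \<in> {1, -1}}"
    and "\<kappa> > 0"
    and "g \<in> SL2" and "g$2$1 \<noteq> 0"
  shows "coset \<Gamma> g \<notin> S_jk \<Gamma> \<kappa> \<longleftrightarrow> g$1$1 / g$2$1 \<notin> S_k \<Gamma> \<kappa>"
proof -
  define a where "a = g$1$1"
  define b where "b = g$1$2"
  define c where "c = g$2$1"
  define d where "d = g$2$2"
  have det: "a*d - b*c = 1" using assms(5) unfolding SL2_def det_2 a_def b_def c_def d_def by simp
  have c0: "c \<noteq> 0" using assms(6) c_def by simp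
  have sub: "psl_subgroup \<Gamma>" using assms(1) psl_lattice_def by blast
  have GS: "\<And>\<gamma>. \<gamma>\<in>\<Gamma> \<Longrightarrow> det \<gamma> = 1" using sub unfolding psl_subgroup_def SL2_def by blast
  have Gmul: "\<And>\<gamma> \<delta>. \<gamma>\<in>\<Gamma> \<Longrightarrow> \<delta>\<in>\<Gamma> \<Longrightarrow> \<gamma> ** \<delta> \<in> \<Gamma>" using sub unfolding psl_subgroup_def by blast
  have Gadj: "\<And>\<gamma>. \<gamma>\<in>\<Gamma> \<Longrightarrow> adj2 \<gamma> \<in> \<Gamma>"
    using sub GS inv2 unfolding psl_subgroup_def by metis
  define Wp where "Wp = (\<lambda>\<gamma>. (\<gamma>$1$1, \<gamma>$2$1)) ` \<Gamma>"
  have P1: "\<bar>\<alpha>\<bar> = 1" if hw: "(\<alpha>,\<beta>)\<in>Wp" "\<beta>=0" for \<alpha> \<beta>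
  proof -
    obtain \<gamma> where \<gamma>: "\<gamma>\<in>\<Gamma>" "\<alpha> = \<gamma>$1$1" "\<beta> = \<gamma>$2$1" using hw(1) unfolding Wp_def image_iff by fastforce
    hence "\<gamma> \<in> {\<gamma>\<in>\<Gamma>. \<gamma>$2$1 = 0}" using hw(2) by simp
    then obtain s n where "s \<in> {1,-1}" "\<gamma> = s *\<^sub>R transl (of_int n)" unfolding assms(3) by blast
    thus ?thesis using \<gamma> by (auto simp: transl_def)
  qed
  have Tr: "transl (of_int n) \<in> \<Gamma>" for n
  proof -
    have "transl (of_int n) \<in> {s *\<^sub>R transl (of_int n) | s n. s \<in> {1, -1}}"
      by (rule CollectI, rule exI[of _ 1], rule exI[of _ n]) simp
    thus ?thesis unfolding assms(3)[symmetric] by simp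
  qed
  have P2: "(\<alpha> + of_int n * \<beta>, \<beta>) \<in> Wp" if hw: "(\<alpha>,\<beta>)\<in>Wp" for \<alpha> \<beta> n
  proof -
    obtain \<gamma> where \<gamma>: "\<gamma>\<in>\<Gamma>" "\<alpha> = \<gamma>$1$1" "\<beta> = \<gamma>$2$1" using hw(1) unfolding Wp_def image_iff by fastforce
    have "transl (of_int n) ** \<gamma> \<in> \<Gamma>" using Gmul Tr \<gamma>(1) by blast
    moreover have "(\<alpha> + of_int n * \<beta>, \<beta>) = ((transl (of_int n) ** \<gamma>)$1$1, (transl (of_int n) ** \<gamma>)$2$1)"
      using \<gamma> by (simp add: mm_ent transl_def)
    ultimately show ?thesis unfolding Wp_def by blast
  qed
  have mj: "m_j (\<gamma> ** g) = vector [d*\<alpha> - b*\<beta>, a*\<beta> - c*\<alpha>]"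
    if "\<gamma>\<in>\<Gamma>" "\<alpha> = \<gamma>$2$2" "\<beta> = - \<gamma>$2$1" for \<gamma> \<alpha> \<beta>
  proof -
    have "det (\<gamma> ** g) = 1" using GS[OF that(1)] assms(5) by (simp add: det_mul SL2_def)
    thus ?thesis unfolding m_j_def using that
      by (simp add: inv2 vec_eq_iff forall_2 matrix_vector_mult_def e1_def sum2 mm_ent a_def b_def c_def d_def
          algebra_simps)
  qed
  have img: "m_j ` coset \<Gamma> g = (\<lambda>(\<alpha>,\<beta>). vector [d*\<alpha> - b*\<beta>, a*\<beta> - c*\<alpha>]) ` Wp"
  proof (intro equalityI subsetI)
    fix v :: "real^2" assume "v \<in> m_j ` coset \<Gamma> g"
    then obtain \<gamma> where \<gamma>: "\<gamma>\<in>\<Gamma>" "v = m_j (\<gamma> ** g)" unfolding coset_def by auto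
    have "(\<gamma>$2$2, - \<gamma>$2$1) \<in> Wp" unfolding Wp_def using Gadj[OF \<gamma>(1)]
      by (intro image_eqI[of _ _ "adj2 \<gamma>"]) auto
    thus "v \<in> (\<lambda>(\<alpha>,\<beta>). vector [d*\<alpha> - b*\<beta>, a*\<beta> - c*\<alpha>]) ` Wp"
      using mj[OF \<gamma>(1) refl refl] \<gamma>(2) by (intro image_eqI) auto
  next
    fix v :: "real^2" assume "v \<in> (\<lambda>(\<alpha>,\<beta>). vector [d*\<alpha> - b*\<beta>, a*\<beta> - c*\<alpha>]) ` Wp"
    then obtain \<delta> where \<delta>: "\<delta>\<in>\<Gamma>" "v = vector [d*\<delta>$1$1 - b*\<delta>$2$1, a*\<delta>$2$1 - c*\<delta>$1$1]"
      unfolding Wp_def by auto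
    have "v = m_j (adj2 \<delta> ** g)" using mj[OF Gadj[OF \<delta>(1)], of "\<delta>$1$1" "\<delta>$2$1"] \<delta>(2) by simp
    moreover have "adj2 \<delta> ** g \<in> coset \<Gamma> g" unfolding coset_def using Gadj[OF \<delta>(1)] by blast
    ultimately show "v \<in> m_j ` coset \<Gamma> g" by blast
  qed
  have Sjk: "coset \<Gamma> g \<in> S_jk \<Gamma> \<kappa> \<longleftrightarrow> (\<exists>\<mu>>0. \<exists>\<nu>>0. \<forall>(\<alpha>,\<beta>)\<in>Wp. \<bar>a*\<beta> - c*\<alpha>\<bar> \<ge> \<mu> \<or> \<bar>d*\<alpha> - b*\<beta>\<bar> powr \<kappa> * \<bar>a*\<beta> - c*\<alpha>\<bar> \<ge> \<nu>)"
    unfolding S_jk_def mem_Collect_eq img by (simp add: case_prod_beta)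
  have Sk: "a/c \<in> S_k \<Gamma> \<kappa> \<longleftrightarrow> (\<exists>C>0. \<forall>(\<alpha>,\<beta>)\<in>Wp. \<beta>\<noteq>0 \<longrightarrow> \<bar>\<beta>\<bar> powr \<kappa> * \<bar>a/c*\<beta> - \<alpha>\<bar> \<ge> C)"
    unfolding S_k_def Wp_def by (auto simp: mv_e1)
  have "coset \<Gamma> g \<in> S_jk \<Gamma> \<kappa> \<longleftrightarrow> a/c \<in> S_k \<Gamma> \<kappa>"
    unfolding Sjk Sk
  proof
    assume "\<exists>\<mu>>0. \<exists>\<nu>>0. \<forall>(\<alpha>,\<beta>)\<in>Wp. \<bar>a*\<beta> - c*\<alpha>\<bar> \<ge> \<mu> \<or> \<bar>d*\<alpha> - b*\<beta>\<bar> powr \<kappa> * \<bar>a*\<beta> - c*\<alpha>\<bar> \<ge> \<nu>"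
    then obtain \<mu> \<nu> where mu: "\<mu>>0" and nu: "\<nu>>0" and G: "\<forall>(\<alpha>,\<beta>)\<in>Wp. \<bar>a*\<beta> - c*\<alpha>\<bar> \<ge> \<mu> \<or> \<bar>d*\<alpha> - b*\<beta>\<bar> powr \<kappa> * \<bar>a*\<beta> - c*\<alpha>\<bar> \<ge> \<nu>"
      by blast
    show "\<exists>C>0. \<forall>(\<alpha>,\<beta>)\<in>Wp. \<beta>\<noteq>0 \<longrightarrow> \<bar>\<beta>\<bar> powr \<kappa> * \<bar>a/c*\<beta> - \<alpha>\<bar> \<ge> C"
      by (rule dir2[OF det c0 assms(4) P2 mu nu]) (use G in auto)
  next
    assume "\<exists>C>0. \<forall>(\<alpha>,\<beta>)\<in>Wp. \<beta>\<noteq>0 \<longrightarrow> \<bar>\<beta>\<bar> powr \<kappa> * \<bar>a/c*\<beta> - \<alpha>\<bar> \<ge> C"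
    then obtain C where Cp: "C>0" and H: "\<forall>(\<alpha>,\<beta>)\<in>Wp. \<beta>\<noteq>0 \<longrightarrow> \<bar>\<beta>\<bar> powr \<kappa> * \<bar>a/c*\<beta> - \<alpha>\<bar> \<ge> C" by blast
    show "\<exists>\<mu>>0. \<exists>\<nu>>0. \<forall>(\<alpha>,\<beta>)\<in>Wp. \<bar>a*\<beta> - c*\<alpha>\<bar> \<ge> \<mu> \<or> \<bar>d*\<alpha> - b*\<beta>\<bar> powr \<kappa> * \<bar>a*\<beta> - c*\<alpha>\<bar> \<ge> \<nu>"
      by (rule dir1[OF det c0 assms(4) P1 Cp]) (use H in auto)
  qed
  thus ?thesis unfolding a_def c_def by blast
qed

end
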